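(* Under the same setting as the context (line-of-sight-only channel $\mathbf{h}_k=\alpha_k\mathbf{a}(\theta_k)$ with $\alpha_k\neq 0$), let $\hat\alpha\in\mathbb{C}\setminus\{0\}$ be arbitrary. Then $\phi\mapsto\gamma(\hat\alpha\,\mathbf{a}(\phi),\mathbf{F}_k,\mathbf{y}_k)$ attains its maximum over $[-\pi,\pi)$, and every maximizer $$\bar\phi^\star\in\arg\max_{\phi\in[-\pi,\pi)}\gamma(\hat\alpha\,\mathbf{a}(\phi),\mathbf{F}_k,\mathbf{y}_k)$$ satisfies $\mathbf{a}(\bar\phi^\star)=\mathbf{a}(\theta_k)$.
   Context: Let $N\ge 2$, $p_{\rm t}>0$, $\sigma^2>0$, and fix $k\in\{1,\dots,N\}$. The array response vector is $\mathbf{a}(\theta)=(1,e^{j\pi\sin\theta},\dots,e^{j\pi(N-1)\sin\theta})^{\mathsf T}\in\mathbb{C}^N$. $\mathbf{U}_N$ is the normalized DFT matrix, $\mathbf{U}_N(a,b)=\frac{1}{\sqrt N}e^{-j2\pi(a-1)(b-1)/N}$; $\mathbf{C}_N(i,k)=((i-k)\bmod N)+1$; and for $k'\in\{1,\dots,N\}$, $\mathbf{F}_{k'}$ is the matrix whose $n$-th column $\mathbf{p}_{[n,k']}$ is the $\mathbf{C}_N(n,k')$-th column of $\mathbf{U}_N$. For $n\in\{1,\dots,N\}$, $\mathbf{P}_n$ is the matrix whose $k'$-th column is $\mathbf{p}_{[n,k']}$. A symbol vector $\mathbf{s}\in\mathbb{C}^N$ with $\mathbb{E}[\mathbf{s}\mathbf{s}^{\mathsf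 H}]=\mathbf{I}_N$ is sent with $\mathbf{x}_n=\frac{1}{\sqrt N}\mathbf{P}_n\mathbf{s}$; device $k$ receives $\mathbf{y}_k=(y_{[1,k]},\dots,y_{[N,k]})^{\mathsf T}$ with $y_{[n,k]}=\sqrt{p_{\rm t}}\mathbf{h}_k^{\mathsf H}\mathbf{x}_n+z_{[n,k]}$, so that $\mathbf{y}_k=\sqrt{p_{\rm t}/N}\sum_{k'=1}^N\mathbf{s}(k')\mathbf{F}_{k'}^{\mathsf T}\mathbf{h}_k^{*}+\mathbf{z}_k$, where $\mathbf{z}_k$ is independent of $\mathbf{s}$, zero mean, with $\mathbb{E}[\mathbf{z}_k\mathbf{z}_k^{\mathsf H}]=\sigma^2\mathbf{I}_N$. For a candidate channel $\mathbf{h}\in\mathbb{C}^N$ with all entries nonzero, let $\tilde{\mathbf{h}}=\mathbf{1}_N\oslash(\mathbf{h}^* )$ (entrywise division), $g(\mathbf{h})=\tilde{\mathbf{h}}^{\mathsf T}\mathbf{F}_k^*\mathbf{F}_k^{\mathsf T}\mathbf{h}_k^*$, $v_{k'}(\mathbf{h})=\tilde{\mathbf{h}}^{\mathsf T}\mathbf{F}_k^*\mathbf{F}_{k'}^{\mathsf T}\mathbf{h}_k^*$, so that the combined signal $\tilde{\mathbf{h}}^{\mathsf T}\mathbf{F}_k^*\mathbf{y}_k=P+I$ with $P=\sqrt{p_{\rm t}/N}\,\mathbf{s}(k)g(\mathbf{h})$ and $I=\sqrt{p_{\rm t}/N}\sum_{k'\neq k}\mathbf{s}(k')v_{k'}(\mathbf{h})+\tilde{\mathbf{h}}^{\mathsf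 T}\mathbf{F}_k^*\mathbf{z}_k$. The SINR is $\gamma(\mathbf{h},\mathbf{F}_k,\mathbf{y}_k)=\mathbb{E}[|P|^2]/\mathbb{E}[|I|^2]$, expectations over $\mathbf{s}$ and $\mathbf{z}_k$. *)

theory Defs
  imports "HOL-Probability.Probability"
begin

(* All vectors/matrices use the paper's 1-based indexing: a vector in C^N is a
   function nat => complex read on {1..N}; a matrix is nat => nat => complex read
   on {1..N} x {1..N}. *)

definition arr :: "real \<Rightarrow> nat \<Rightarrow> complex" where
  "arr \<theta> n = cis (pi * real (n - 1) * sin \<theta>)"

definition dftU :: "nat \<Rightarrow> nat \<Rightarrow> nat \<Rightarrow> complex" where
  "dftU N a b = cis (- 2 * pi * real (a - 1) * real (b - 1) / real N) / complex_of_real (sqrt (real N))"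

definition circC :: "nat \<Rightarrow> nat \<Rightarrow> nat \<Rightarrow> nat" where
  "circC N i k = nat ((int i - int k) mod int N) + 1"

definition Fmat :: "nat \<Rightarrow> nat \<Rightarrow> nat \<Rightarrow> nat \<Rightarrow> complex" where
  "Fmat N k' a n = dftU N a (circC N n k')"

definition htilde :: "(nat \<Rightarrow> complex) \<Rightarrow> nat \<Rightarrow> complex" where
  "htilde h n = 1 / cnj (h n)"

(* v_{k'}(h) = h~^T F_k^* F_{k'}^T h_k^* ; g(h) = v_k(h) *)
definition vfun :: "nat \<Rightarrow> nat \<Rightarrow> nat \<Rightarrow> (nat \<Rightarrow> complex) \<Rightarrow> (nat \<Rightarrow> complex) \<Rightarrow> complex" where
  "vfun N k k' hk h =
     (\<Sum>a\<in>{1..N}. \<Sum>n\<in>{1..N}. \<Sum>b\<in>{1..N}.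
        htilde h a * cnj (Fmat N k a n) * Fmat N k' b n * cnj (hk b))"

definition gfun :: "nat \<Rightarrow> nat \<Rightarrow> (nat \<Rightarrow> complex) \<Rightarrow> (nat \<Rightarrow> complex) \<Rightarrow> complex" where
  "gfun N k hk h = vfun N k k hk h"

definition Psig :: "nat \<Rightarrow> real \<Rightarrow> nat \<Rightarrow> (nat \<Rightarrow> complex) \<Rightarrow> (nat \<Rightarrow> 'a \<Rightarrow> complex)
                    \<Rightarrow> (nat \<Rightarrow> complex) \<Rightarrow> 'a \<Rightarrow> complex" where
  "Psig N pt k hk s h \<omega> = complex_of_real (sqrt (pt / real N)) * s k \<omega> * gfun N k hk h"

definition Iint :: "nat \<Rightarrow> real \<Rightarrow> nat \<Rightarrow> (nat \<Rightarrow> complex) \<Rightarrow> (nat \<Rightarrow> 'a \<Rightarrow> complex)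
                    \<Rightarrow> (nat \<Rightarrow> 'a \<Rightarrow> complex) \<Rightarrow> (nat \<Rightarrow> complex) \<Rightarrow> 'a \<Rightarrow> complex" where
  "Iint N pt k hk s z h \<omega> =
     complex_of_real (sqrt (pt / real N)) * (\<Sum>k'\<in>{1..N} - {k}. s k' \<omega> * vfun N k k' hk h)
     + (\<Sum>a\<in>{1..N}. \<Sum>n\<in>{1..N}. htilde h a * cnj (Fmat N k a n) * z n \<omega>)"

definition SINR :: "'a measure \<Rightarrow> nat \<Rightarrow> real \<Rightarrow> nat \<Rightarrow> (nat \<Rightarrow> complex) \<Rightarrow> (nat \<Rightarrow> 'a \<Rightarrow> complex)
                    \<Rightarrow> (nat \<Rightarrow> 'a \<Rightarrow> complex) \<Rightarrow> (nat \<Rightarrow> complex) \<Rightarrow> real" where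
  "SINR M N pt k hk s z h =
     integral\<^sup>L M (\<lambda>\<omega>. (cmod (Psig N pt k hk s h \<omega>))\<^sup>2)
     / integral\<^sup>L M (\<lambda>\<omega>. (cmod (Iint N pt k hk s z h \<omega>))\<^sup>2)"

end

theory Submission
  imports Defs
begin


lemma cmod_sq_Re: "(cmod x)^2 = Re (x * cnj x)"
  by (simp add: complex_mult_cnj cmod_def)

context prob_space begin

lemma L2_integrable:
  fixes f :: "'a \<Rightarrow> complex"
  assumes m: "f \<in> borel_measurable M" and i: "integrable M (\<lambda>\<omega>. f \<omega> * cnj (f \<omega>))"
  shows "integrable M f"
proof (rule Bochner_Integration.integrable_bound[where f="\<lambda>\<omega>. 1 + f \<omega> * cnj (f \<omega>)"])
  show "integrable M (\<lambda>\<omega>. 1 + f \<omega> * cnj (f \<omega>))" using i by simp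
  show "f \<in> borel_measurable M" by fact
  show "AE x in M. norm (f x) \<le> norm (1 + f x * cnj (f x))"
  proof
    fix x
    have e: "1 + f x * cnj (f x) = complex_of_real (1 + (cmod (f x))^2)"
      by (simp add: complex_norm_square[symmetric])
    have "cmod (f x) \<le> 1 + (cmod (f x))^2"
      proof (cases "cmod (f x) \<le> 1")
      case True then show ?thesis by (simp add: add_increasing2)
    next
      case False then have "1 * cmod (f x) \<le> cmod (f x) * cmod (f x)" by (intro mult_right_mono) auto
      then have "cmod (f x) \<le> (cmod (f x))^2" by (simp add: power2_eq_square)
      then show ?thesis by simp
    qed
    then show "norm (f x) \<le> norm (1 + f x * cnj (f x))" unfolding e norm_of_real
      by (simp add: abs_of_nonneg add_nonneg_nonneg)
  qed
qed

end


lemma int_dsum: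
  fixes F :: "'i \<Rightarrow> 'j \<Rightarrow> 'a \<Rightarrow> complex"
  assumes "finite I" "finite J" "\<And>i j. i \<in> I \<Longrightarrow> j \<in> J \<Longrightarrow> integrable M (F i j)"
  shows "integral\<^sup>L M (\<lambda>\<omega>. \<Sum>i\<in>I. \<Sum>j\<in>J. c i j * F i j \<omega>) = (\<Sum>i\<in>I. \<Sum>j\<in>J. c i j * integral\<^sup>L M (F i j))"
  using assms by (simp add: integral_sum)

lemma int_dsum_ok:
  fixes F :: "'i \<Rightarrow> 'j \<Rightarrow> 'a \<Rightarrow> complex"
  assumes "finite I" "finite J" "\<And>i j. i \<in> I \<Longrightarrow> j \<in> J \<Longrightarrow> integrable M (F i j)"
  shows "integrable M (\<lambda>\<omega>. \<Sum>i\<in>I. \<Sum>j\<in>J. c i j * F i j \<omega>)"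
  using assms by (auto intro!: integrable_sum integrable_mult_right)

lemma expand_quad:
  fixes a b :: "nat \<Rightarrow> complex"
  shows "((\<Sum>i\<in>S. a i * x i) + (\<Sum>n\<in>T. b n * y n)) * cnj ((\<Sum>i\<in>S. a i * x i) + (\<Sum>n\<in>T. b n * y n))
   = (\<Sum>i\<in>S. \<Sum>j\<in>S. (a i * cnj (a j)) * (x i * cnj (x j)))
   + (\<Sum>i\<in>S. \<Sum>j\<in>T. (a i * cnj (b j)) * (x i * cnj (y j)))
   + (\<Sum>i\<in>T. \<Sum>j\<in>S. (b i * cnj (a j)) * (y i * cnj (x j)))
   + (\<Sum>i\<in>T. \<Sum>j\<in>T. (b i * cnj (b j)) * (y i * cnj (y j)))"
  by (simp add: cnj_sum distrib_left distrib_right sum_product mult_ac)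


lemma quad_E:
  fixes M :: "'a measure" and s z :: "nat \<Rightarrow> 'a \<Rightarrow> complex" and a b :: "nat \<Rightarrow> complex"
  assumes M: "prob_space M"
    and s_meas: "\<forall>i\<in>{1..N}. s i \<in> borel_measurable M"
    and z_meas: "\<forall>i\<in>{1..N}. z i \<in> borel_measurable M"
    and s_cov: "\<forall>i\<in>{1..N}. \<forall>j\<in>{1..N}.
                  integrable M (\<lambda>\<omega>. s i \<omega> * cnj (s j \<omega>)) \<and>
                  integral\<^sup>L M (\<lambda>\<omega>. s i \<omega> * cnj (s j \<omega>)) = (if i = j then 1 else 0)"
    and z_mean: "\<forall>i\<in>{1..N}. integrable M (z i) \<and> integral\<^sup>L M (z i) = 0"
    and z_cov: "\<forall>i\<in>{1..N}. \<forall>j\<in>{1..N}.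
                  integrable M (\<lambda>\<omega>. z i \<omega> * cnj (z j \<omega>)) \<and>
                  integral\<^sup>L M (\<lambda>\<omega>. z i \<omega> * cnj (z j \<omega>))
                    = (if i = j then complex_of_real sigma2 else 0)"
    and indep: "prob_space.indep_var M
                  (Pi\<^sub>M {1..N} (\<lambda>_. borel)) (\<lambda>\<omega>. restrict (\<lambda>i. s i \<omega>) {1..N})
                  (Pi\<^sub>M {1..N} (\<lambda>_. borel)) (\<lambda>\<omega>. restrict (\<lambda>i. z i \<omega>) {1..N})"
    and S: "S \<subseteq> {1..N}" and T: "T \<subseteq> {1..N}"
  shows "integral\<^sup>L M (\<lambda>\<omega>. (cmod ((\<Sum>i\<in>S. a i * s i \<omega>) + (\<Sum>n\<in>T. b n * z n \<omega>)))^2)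
     = (\<Sum>i\<in>S. (cmod (a i))^2) + sigma2 * (\<Sum>n\<in>T. (cmod (b n))^2)"
proof -
  have fS: "finite S" "finite T" using S T finite_subset by blast+
  have cross: "integrable M (\<lambda>\<omega>. s i \<omega> * cnj (z n \<omega>)) \<and> integral\<^sup>L M (\<lambda>\<omega>. s i \<omega> * cnj (z n \<omega>)) = 0"
    if i: "i \<in> {1..N}" and n: "n \<in> {1..N}" for i n
  proof -
    have mc: "(\<lambda>f. cnj (f n)) \<in> borel_measurable (Pi\<^sub>M {1..N} (\<lambda>_. borel :: complex measure))"
      by (rule borel_measurable_continuous_on[where f=cnj]) (auto intro!: continuous_intros measurable_component_singleton simp: n[simplified])
    have iv: "prob_space.indep_var M borel (s i) borel (\<lambda>\<omega>. cnj (z n \<omega>))"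
      using mc prob_space.indep_var_compose[OF M indep, of "\<lambda>f. f i" borel "\<lambda>f. cnj (f n)" borel] i n
      by (simp add: comp_def)
    have iS: "integrable M (s i)"
      using prob_space.L2_integrable[OF M] s_meas s_cov i by blast
    have iz: "integrable M (\<lambda>\<omega>. cnj (z n \<omega>))" using z_mean n by auto
    show ?thesis
      using prob_space.indep_var_lebesgue_integral[OF M iv iS iz]
        prob_space.indep_var_integrable[OF M iv iS iz] z_mean n by simp
  qed
  have cross2: "integrable M (\<lambda>\<omega>. z n \<omega> * cnj (s i \<omega>)) \<and> integral\<^sup>L M (\<lambda>\<omega>. z n \<omega> * cnj (s i \<omega>)) = 0"
    if i: "i \<in> {1..N}" and n: "n \<in> {1..N}" for i n
  proof -
    have e: "(\<lambda>\<omega>. z n \<omega> * cnj (s i \<omega>)) = (\<lambda>\<omega>. cnj (s i \<omega> * cnj (z n \<omega>)))" by auto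
    from cross[OF i n] have a: "integrable M (\<lambda>\<omega>. s i \<omega> * cnj (z n \<omega>))"
      and b: "integral\<^sup>L M (\<lambda>\<omega>. s i \<omega> * cnj (z n \<omega>)) = 0" by auto
    have c: "integrable M (\<lambda>\<omega>. cnj (s i \<omega> * cnj (z n \<omega>)))"
      using a by (rule integrable_cnj)
    have d: "integral\<^sup>L M (\<lambda>\<omega>. cnj (s i \<omega> * cnj (z n \<omega>))) = 0"
      by (subst Bochner_Integration.integral_cnj) (simp add: b)
    show ?thesis unfolding e using c d by blast
  qed
  have crS: "integrable M (\<lambda>\<omega>. s i \<omega> * cnj (z n \<omega>)) \<and> integral\<^sup>L M (\<lambda>\<omega>. s i \<omega> * cnj (z n \<omega>)) = 0"
    if "i \<in> S" "n \<in> T" for i n using cross S T that by blast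
  have crS2: "integrable M (\<lambda>\<omega>. z n \<omega> * cnj (s i \<omega>)) \<and> integral\<^sup>L M (\<lambda>\<omega>. z n \<omega> * cnj (s i \<omega>)) = 0"
    if "i \<in> S" "n \<in> T" for i n using cross2 S T that by blast
  have sS: "integrable M (\<lambda>\<omega>. s i \<omega> * cnj (s j \<omega>)) \<and>
      integral\<^sup>L M (\<lambda>\<omega>. s i \<omega> * cnj (s j \<omega>)) = (if i = j then 1 else 0)"
    if "i \<in> S" "j \<in> S" for i j using s_cov S that by blast
  have zT: "integrable M (\<lambda>\<omega>. z i \<omega> * cnj (z j \<omega>)) \<and>
      integral\<^sup>L M (\<lambda>\<omega>. z i \<omega> * cnj (z j \<omega>)) = (if i = j then complex_of_real sigma2 else 0)"
    if "i \<in> T" "j \<in> T" for i j using z_cov T that by blast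
  let ?W = "\<lambda>\<omega>. (\<Sum>i\<in>S. \<Sum>j\<in>S. (a i * cnj (a j)) * (s i \<omega> * cnj (s j \<omega>)))
   + (\<Sum>i\<in>S. \<Sum>j\<in>T. (a i * cnj (b j)) * (s i \<omega> * cnj (z j \<omega>)))
   + (\<Sum>i\<in>T. \<Sum>j\<in>S. (b i * cnj (a j)) * (z i \<omega> * cnj (s j \<omega>)))
   + (\<Sum>i\<in>T. \<Sum>j\<in>T. (b i * cnj (b j)) * (z i \<omega> * cnj (z j \<omega>)))"
  have i1: "integrable M (\<lambda>\<omega>. \<Sum>i\<in>S. \<Sum>j\<in>S. (a i * cnj (a j)) * (s i \<omega> * cnj (s j \<omega>)))"
    by (rule int_dsum_ok) (use fS sS in auto)
  have i2: "integrable M (\<lambda>\<omega>. \<Sum>i\<in>S. \<Sum>j\<in>T. (a i * cnj (b j)) * (s i \<omega> * cnj (z j \<omega>)))"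
    by (rule int_dsum_ok) (use fS crS in auto)
  have i3: "integrable M (\<lambda>\<omega>. \<Sum>i\<in>T. \<Sum>j\<in>S. (b i * cnj (a j)) * (z i \<omega> * cnj (s j \<omega>)))"
    by (rule int_dsum_ok) (use fS crS2 in auto)
  have i4: "integrable M (\<lambda>\<omega>. \<Sum>i\<in>T. \<Sum>j\<in>T. (b i * cnj (b j)) * (z i \<omega> * cnj (z j \<omega>)))"
    by (rule int_dsum_ok) (use fS zT in auto)
  have e1: "integral\<^sup>L M (\<lambda>\<omega>. \<Sum>i\<in>S. \<Sum>j\<in>S. (a i * cnj (a j)) * (s i \<omega> * cnj (s j \<omega>)))
      = (\<Sum>i\<in>S. \<Sum>j\<in>S. (a i * cnj (a j)) * (if i = j then 1 else 0))"
    by (subst int_dsum) (use fS sS in \<open>auto intro!: sum.cong\<close>)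
  have e2: "integral\<^sup>L M (\<lambda>\<omega>. \<Sum>i\<in>S. \<Sum>j\<in>T. (a i * cnj (b j)) * (s i \<omega> * cnj (z j \<omega>))) = 0"
    by (subst int_dsum) (use fS crS in \<open>auto intro!: sum.neutral\<close>)
  have e3: "integral\<^sup>L M (\<lambda>\<omega>. \<Sum>i\<in>T. \<Sum>j\<in>S. (b i * cnj (a j)) * (z i \<omega> * cnj (s j \<omega>))) = 0"
    by (subst int_dsum) (use fS crS2 in \<open>auto intro!: sum.neutral\<close>)
  have e4: "integral\<^sup>L M (\<lambda>\<omega>. \<Sum>i\<in>T. \<Sum>j\<in>T. (b i * cnj (b j)) * (z i \<omega> * cnj (z j \<omega>)))
      = (\<Sum>i\<in>T. \<Sum>j\<in>T. (b i * cnj (b j)) * (if i = j then complex_of_real sigma2 else 0))"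
    by (subst int_dsum) (use fS zT in \<open>auto intro!: sum.cong\<close>)
  have d1: "(\<Sum>i\<in>S. \<Sum>j\<in>S. (a i * cnj (a j)) * (if i = j then 1 else 0)) = (\<Sum>i\<in>S. a i * cnj (a i))"
    by (rule sum.cong[OF refl]) (simp add: fS if_distrib[of "\<lambda>x. _ * x"] cong: if_cong)
  have d4: "(\<Sum>i\<in>T. \<Sum>j\<in>T. (b i * cnj (b j)) * (if i = j then complex_of_real sigma2 else 0))
      = (\<Sum>i\<in>T. b i * cnj (b i) * complex_of_real sigma2)"
    by (rule sum.cong[OF refl]) (simp add: fS if_distrib[of "\<lambda>x. _ * x"] cong: if_cong)
  have "integral\<^sup>L M ?W = (\<Sum>i\<in>S. a i * cnj (a i)) + (\<Sum>i\<in>T. b i * cnj (b i) * complex_of_real sigma2)"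
    apply (subst Bochner_Integration.integral_add, rule Bochner_Integration.integrable_add[OF Bochner_Integration.integrable_add[OF i1 i2] i3], rule i4)
    apply (subst Bochner_Integration.integral_add, rule Bochner_Integration.integrable_add[OF i1 i2], rule i3)
    apply (subst Bochner_Integration.integral_add, rule i1, rule i2)
    unfolding e1 e2 e3 e4 d1 d4 by simp
  also have "\<dots> = complex_of_real ((\<Sum>i\<in>S. (cmod (a i))^2) + sigma2 * (\<Sum>n\<in>T. (cmod (b n))^2))"
    by (simp add: complex_norm_square[symmetric] sum_distrib_left mult.commute)
  finally have W: "integral\<^sup>L M ?W = complex_of_real ((\<Sum>i\<in>S. (cmod (a i))^2) + sigma2 * (\<Sum>n\<in>T. (cmod (b n))^2))" .
  have "(\<lambda>\<omega>. (cmod ((\<Sum>i\<in>S. a i * s i \<omega>) + (\<Sum>n\<in>T. b n * z n \<omega>)))^2) = (\<lambda>\<omega>. Re (?W \<omega>))"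
    by (simp only: cmod_sq_Re expand_quad)
  then have "integral\<^sup>L M (\<lambda>\<omega>. (cmod ((\<Sum>i\<in>S. a i * s i \<omega>) + (\<Sum>n\<in>T. b n * z n \<omega>)))^2)
     = integral\<^sup>L M (\<lambda>\<omega>. Re (?W \<omega>))" by (rule arg_cong)
  also have "\<dots> = Re (integral\<^sup>L M ?W)" by (rule Bochner_Integration.integral_Re) (intro Bochner_Integration.integrable_add i1 i2 i3 i4)
  also have "\<dots> = (\<Sum>i\<in>S. (cmod (a i))^2) + sigma2 * (\<Sum>n\<in>T. (cmod (b n))^2)"
    by (simp only: W Re_complex_of_real)
  finally show ?thesis .
qed


definition ee :: "nat \<Rightarrow> real \<Rightarrow> complex" where "ee N x = cis (2*pi*x/real N)"

lemma ee_add: "ee N (x+y) = ee N x * ee N y"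
  by (simp add: ee_def cis_mult add_divide_distrib distrib_left)

lemma ee_cnj: "cnj (ee N x) = ee N (-x)"
  by (simp add: ee_def cis_cnj)

lemma ee_int: "N > 0 \<Longrightarrow> ee N (real N * of_int j) = 1"
proof -
  assume "N > 0"
  then have "2 * pi * (real N * of_int j) / real N = 2 * pi * of_int j" by simp
  then show ?thesis by (simp add: ee_def)
qed

lemma ee_pow: "ee N x ^ n = ee N (real n * x)"
  unfolding ee_def Complex.DeMoivre by (simp add: times_divide_eq_right mult_ac)

lemma sum_pow_1N: "(\<Sum>n\<in>{1..N}. (q::complex)^n) = q * (\<Sum>i<N. q^i)"
  by (induct N) (simp_all add: algebra_simps)

lemma ee_orth:
  assumes N: "N > 0"
  shows "(\<Sum>n\<in>{1..N}. ee N (of_int m * real n)) = (if int N dvd m then of_nat N else 0)"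
proof (cases "int N dvd m")
  case True
  then obtain j where j: "m = int N * j" by (auto elim: dvdE)
  have "ee N (of_int m * real n) = 1" for n
  proof -
    have "of_int m * real n = real N * of_int (j * int n)" using j by simp
    then show ?thesis by (metis ee_int[OF N])
  qed
  then show ?thesis using True by simp
next
  case False
  define q where "q = ee N (of_int m)"
  have q1: "q \<noteq> 1"
  proof
    assume "q = 1"
    then have "cos (2 * pi * of_int m / real N) = 1" unfolding q_def ee_def
      by (metis cis.sel(1) one_complex.sel(1))
    then obtain j :: int where "2 * pi * of_int m / real N = of_int j * 2 * pi"
      using cos_one_2pi_int by blast
    then have "of_int m = real N * of_int j" using N by (simp add: field_simps)
    then have "m = int N * j" by (metis of_int_eq_iff of_int_mult of_int_of_nat_eq)
    then show False using False by simp
  qed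
  have qN: "q ^ N = 1" unfolding q_def ee_pow using ee_int[OF N, of m] by simp
  have "(\<Sum>n\<in>{1..N}. ee N (of_int m * real n)) = (\<Sum>n\<in>{1..N}. q^n)"
    unfolding q_def ee_pow by (simp add: mult.commute)
  also have "\<dots> = 0" unfolding sum_pow_1N sum_gp_strict using q1 qN by simp
  finally show ?thesis using False by simp
qed

lemma ee_orth2:
  assumes N: "N > 0" and a: "a \<in> {1..N}" and b: "b \<in> {1..N}"
  shows "(\<Sum>n\<in>{1..N}. ee N (of_int (int a - int b) * real n)) = (if a = b then of_nat N else 0)"
proof -
  have "int N dvd (int a - int b) \<longleftrightarrow> a = b"
  proof
    assume d: "int N dvd (int a - int b)"
    show "a = b"
    proof (rule ccontr)
      assume "a \<noteq> b"
      then have "int a - int b \<noteq> 0" by simp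
      then have "int N \<le> \<bar>int a - int b\<bar>" using dvd_imp_le_int[OF _ d] by simp
      then show False using a b by auto
    qed
  qed simp
  then show ?thesis using ee_orth[OF N, of "int a - int b"] by (simp only:)
qed

lemma F_eq:
  assumes N: "N > 0" and a: "a \<ge> 1"
  shows "Fmat N k a n = cnj (ee N (real (a-1) * (real n - real k))) / complex_of_real (sqrt (real N))"
proof -
  define d where "d = int n - int k"
  define m where "m = d mod int N"
  define q where "q = d div int N"
  have m0: "m \<ge> 0" using N by (simp add: m_def)
  have dm: "d = int N * q + m" unfolding m_def q_def by simp
  have c: "real (circC N n k - 1) = of_int m"
    using m0 by (simp add: circC_def m_def d_def)
  have rd: "real n - real k = of_int d" by (simp add: d_def)
  have e: "- 2 * pi * real (a - 1) * real (circC N n k - 1) / real N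
      = - (2 * pi * (real (a-1) * (real n - real k)) / real N) + 2 * pi * of_int (int (a-1) * q)"
    unfolding c rd using N by (simp add: dm field_simps)
  have "cis (- 2 * pi * real (a - 1) * real (circC N n k - 1) / real N)
      = cis (- (2 * pi * (real (a-1) * (real n - real k)) / real N))"
    unfolding e cis_mult[symmetric] by (simp add: cis_multiple_2pi)
  then show ?thesis
    by (simp add: Fmat_def dftU_def ee_def cis_cnj)
qed

lemma W_eq:
  assumes N: "N > 0" and a: "a \<in> {1..N}" and b: "b \<in> {1..N}"
  shows "(\<Sum>n\<in>{1..N}. cnj (Fmat N k a n) * Fmat N k' b n)
     = (if a = b then ee N (real (a-1) * (real k' - real k)) else 0)"
proof -
  define C where "C = real (b-1) * real k' - real (a-1) * real k"
  define s where "s = complex_of_real (sqrt (real N))"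
  have ss: "s * s = of_nat N" unfolding s_def
    by (simp flip: of_real_mult)
  have ra: "real (a-1) = real a - 1" using a by auto
  have rb: "real (b-1) = real b - 1" using b by auto
  have t: "cnj (Fmat N k a n) * Fmat N k' b n = ee N (of_int (int a - int b) * real n) * ee N C / of_nat N" for n
  proof -
    have Fa: "Fmat N k a n = cnj (ee N (real (a-1) * (real n - real k))) / s"
      unfolding s_def using a by (intro F_eq[OF N]) auto
    have Fb: "Fmat N k' b n = cnj (ee N (real (b-1) * (real n - real k'))) / s"
      unfolding s_def using b by (intro F_eq[OF N]) auto
    have "cnj (Fmat N k a n) * Fmat N k' b n
        = ee N (real (a-1) * (real n - real k)) * ee N (- (real (b-1) * (real n - real k'))) / (s * s)"
      unfolding Fa Fb by (simp add: s_def ee_cnj)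
    also have "ee N (real (a-1) * (real n - real k)) * ee N (- (real (b-1) * (real n - real k')))
        = ee N (of_int (int a - int b) * real n + C)"
      unfolding ee_add[symmetric] C_def ra rb by (rule arg_cong[where f="ee N"]) (simp add: algebra_simps)
    finally show ?thesis unfolding ss ee_add by simp
  qed
  have "(\<Sum>n\<in>{1..N}. cnj (Fmat N k a n) * Fmat N k' b n)
      = (\<Sum>n\<in>{1..N}. ee N C / of_nat N * ee N (of_int (int a - int b) * real n))"
    unfolding t by (intro sum.cong refl) (simp add: mult.commute)
  also have "\<dots> = ee N C / of_nat N * (\<Sum>n\<in>{1..N}. ee N (of_int (int a - int b) * real n))"
    by (rule sum_distrib_left[symmetric])
  also have "\<dots> = (if a = b then ee N C else 0)" unfolding ee_orth2[OF N a b] using N by simp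
  also have "\<dots> = (if a = b then ee N (real (a-1) * (real k' - real k)) else 0)"
    by (simp add: C_def right_diff_distrib)
  finally show ?thesis .
qed


lemma delta_sum:
  assumes "finite A" "a \<in> A"
  shows "(\<Sum>b\<in>A. X b * (if a = b then Y else 0)) = X a * (Y::complex)"
proof -
  have "(\<Sum>b\<in>A. X b * (if a = b then Y else 0)) = (\<Sum>b\<in>A. if a = b then X b * Y else 0)"
    by (rule sum.cong) auto
  also have "\<dots> = X a * Y" using assms by simp
  finally show ?thesis .
qed

lemma v_eq:
  assumes N: "N > 0"
  shows "vfun N k k' hk h = (\<Sum>a\<in>{1..N}. htilde h a * cnj (hk a) * ee N (real (a-1) * (real k' - real k)))"
proof -
  have "vfun N k k' hk h = (\<Sum>a\<in>{1..N}. \<Sum>b\<in>{1..N}. htilde h a * cnj (hk b) *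
          (\<Sum>n\<in>{1..N}. cnj (Fmat N k a n) * Fmat N k' b n))"
    unfolding vfun_def
  proof (rule sum.cong[OF refl])
    fix a
    show "(\<Sum>n\<in>{1..N}. \<Sum>b\<in>{1..N}. htilde h a * cnj (Fmat N k a n) * Fmat N k' b n * cnj (hk b))
      = (\<Sum>b\<in>{1..N}. htilde h a * cnj (hk b) * (\<Sum>n\<in>{1..N}. cnj (Fmat N k a n) * Fmat N k' b n))"
      by (subst sum.swap) (simp add: sum_distrib_left mult_ac)
  qed
  also have "\<dots> = (\<Sum>a\<in>{1..N}. \<Sum>b\<in>{1..N}. htilde h a * cnj (hk b) *
          (if a = b then ee N (real (a-1) * (real k' - real k)) else 0))"
    by (rule sum.cong[OF refl], rule sum.cong[OF refl], subst W_eq[OF N]) auto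
  also have "\<dots> = (\<Sum>a\<in>{1..N}. htilde h a * cnj (hk a) * ee N (real (a-1) * (real k' - real k)))"
    by (intro sum.cong refl) (simp add: delta_sum[where X="\<lambda>b. htilde h _ * cnj (hk b)"])
  finally show ?thesis .
qed

lemma sq_sum_expand:
  fixes f :: "'b \<Rightarrow> 'c \<Rightarrow> complex"
  shows "(\<Sum>n\<in>T. (\<Sum>a\<in>A. f a n) * cnj (\<Sum>b\<in>A. f b n)) = (\<Sum>a\<in>A. \<Sum>b\<in>A. \<Sum>n\<in>T. f a n * cnj (f b n))"
proof -
  have "(\<Sum>n\<in>T. (\<Sum>a\<in>A. f a n) * cnj (\<Sum>b\<in>A. f b n)) = (\<Sum>n\<in>T. \<Sum>a\<in>A. \<Sum>b\<in>A. f a n * cnj (f b n))"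
    by (simp add: cnj_sum sum_product)
  also have "\<dots> = (\<Sum>a\<in>A. \<Sum>n\<in>T. \<Sum>b\<in>A. f a n * cnj (f b n))" by (rule sum.swap)
  also have "\<dots> = (\<Sum>a\<in>A. \<Sum>b\<in>A. \<Sum>n\<in>T. f a n * cnj (f b n))" by (intro sum.cong refl sum.swap)
  finally show ?thesis .
qed

lemma cmod_sq_Re': "(cmod x)^2 = Re (x * cnj x)"
  by (simp add: complex_mult_cnj cmod_def)

lemma sum_cmod_sq: "(\<Sum>n\<in>T. (cmod (x n))^2) = Re (\<Sum>n\<in>T. x n * cnj (x n))"
  by (simp add: cmod_sq_Re')

lemma parseval:
  assumes N: "N > 0"
  shows "(\<Sum>k'\<in>{1..N}. (cmod (\<Sum>a\<in>{1..N}. r a * ee N (real (a-1) * (real k' - real k))))^2)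
       = real N * (\<Sum>a\<in>{1..N}. (cmod (r a))^2)"
proof -
  let ?f = "\<lambda>a k'. r a * ee N (real (a-1) * (real k' - real k))"
  have t: "(\<Sum>k'\<in>{1..N}. ?f a k' * cnj (?f b k')) = (if a = b then of_nat N * (r a * cnj (r a)) else 0)"
    if a: "a \<in> {1..N}" and b: "b \<in> {1..N}" for a b
  proof -
    define D where "D = - (of_int (int a - int b) * real k)"
    have e: "?f a k' * cnj (?f b k') = (r a * cnj (r b) * ee N D) * ee N (of_int (int a - int b) * real k')" for k'
    proof -
      have "real (a-1) * (real k' - real k) + - (real (b-1) * (real k' - real k)) = D + of_int (int a - int b) * real k'"
        using a b by (simp add: D_def of_nat_diff algebra_simps)
      then show ?thesis by (simp add: ee_cnj mult_ac flip: ee_add)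
    qed
    have "(\<Sum>k'\<in>{1..N}. ?f a k' * cnj (?f b k')) = (r a * cnj (r b) * ee N D) * (\<Sum>k'\<in>{1..N}. ee N (of_int (int a - int b) * real k'))"
      unfolding e by (rule sum_distrib_left[symmetric])
    also have "\<dots> = (if a = b then of_nat N * (r a * cnj (r a)) else 0)"
      unfolding ee_orth2[OF N a b] by (simp add: D_def ee_def)
    finally show ?thesis .
  qed
  have c: "(\<Sum>a\<in>{1..N}. \<Sum>b\<in>{1..N}. \<Sum>k'\<in>{1..N}. ?f a k' * cnj (?f b k'))
      = (\<Sum>a\<in>{1..N}. \<Sum>b\<in>{1..N}. (if a = b then of_nat N * (r a * cnj (r a)) else 0))"
    by (rule sum.cong[OF refl], rule sum.cong[OF refl], rule t) auto
  also have "\<dots> = (\<Sum>a\<in>{1..N}. of_nat N * (r a * cnj (r a)))"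
    by (rule sum.cong[OF refl]) simp
  also have "\<dots> = complex_of_real (real N * (\<Sum>a\<in>{1..N}. (cmod (r a))^2))"
    by (simp add: complex_norm_square[symmetric] sum_distrib_left)
  finally have c: "(\<Sum>a\<in>{1..N}. \<Sum>b\<in>{1..N}. \<Sum>k'\<in>{1..N}. ?f a k' * cnj (?f b k'))
      = complex_of_real (real N * (\<Sum>a\<in>{1..N}. (cmod (r a))^2))" .
  show ?thesis unfolding sum_cmod_sq sq_sum_expand c Re_complex_of_real ..
qed

lemma noise:
  assumes N: "N > 0"
  shows "(\<Sum>n\<in>{1..N}. (cmod (\<Sum>a\<in>{1..N}. x a * cnj (Fmat N k a n)))^2) = (\<Sum>a\<in>{1..N}. (cmod (x a))^2)"
proof -
  let ?f = "\<lambda>a n. x a * cnj (Fmat N k a n)"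
  have t: "(\<Sum>n\<in>{1..N}. ?f a n * cnj (?f b n)) = (if a = b then x a * cnj (x a) else 0)"
    if a: "a \<in> {1..N}" and b: "b \<in> {1..N}" for a b
  proof -
    have "(\<Sum>n\<in>{1..N}. ?f a n * cnj (?f b n)) = x a * cnj (x b) * (\<Sum>n\<in>{1..N}. cnj (Fmat N k a n) * Fmat N k b n)"
      by (simp add: sum_distrib_left mult_ac)
    then show ?thesis using W_eq[OF N a b, of k k] by (simp add: ee_def)
  qed
  have "(\<Sum>a\<in>{1..N}. \<Sum>b\<in>{1..N}. \<Sum>n\<in>{1..N}. ?f a n * cnj (?f b n))
      = (\<Sum>a\<in>{1..N}. \<Sum>b\<in>{1..N}. (if a = b then x a * cnj (x a) else 0))"
    by (rule sum.cong[OF refl], rule sum.cong[OF refl], rule t) auto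
  also have "\<dots> = (\<Sum>a\<in>{1..N}. x a * cnj (x a))"
    by (rule sum.cong[OF refl]) simp
  also have "\<dots> = complex_of_real (\<Sum>a\<in>{1..N}. (cmod (x a))^2)"
    by (simp add: complex_norm_square[symmetric])
  finally have c: "(\<Sum>a\<in>{1..N}. \<Sum>b\<in>{1..N}. \<Sum>n\<in>{1..N}. ?f a n * cnj (?f b n))
      = complex_of_real (\<Sum>a\<in>{1..N}. (cmod (x a))^2)" .
  show ?thesis unfolding sum_cmod_sq sq_sum_expand c Re_complex_of_real ..
qed


lemma SINR_formula:
  fixes M :: "'a measure" and s z :: "nat \<Rightarrow> 'a \<Rightarrow> complex"
  assumes N: "N > 0" and pt: "pt \<ge> 0" and k: "k \<in> {1..N}"
    and M: "prob_space M"
    and s_meas: "\<forall>i\<in>{1..N}. s i \<in> borel_measurable M"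
    and z_meas: "\<forall>i\<in>{1..N}. z i \<in> borel_measurable M"
    and s_cov: "\<forall>i\<in>{1..N}. \<forall>j\<in>{1..N}.
                  integrable M (\<lambda>\<omega>. s i \<omega> * cnj (s j \<omega>)) \<and>
                  integral\<^sup>L M (\<lambda>\<omega>. s i \<omega> * cnj (s j \<omega>)) = (if i = j then 1 else 0)"
    and z_mean: "\<forall>i\<in>{1..N}. integrable M (z i) \<and> integral\<^sup>L M (z i) = 0"
    and z_cov: "\<forall>i\<in>{1..N}. \<forall>j\<in>{1..N}.
                  integrable M (\<lambda>\<omega>. z i \<omega> * cnj (z j \<omega>)) \<and>
                  integral\<^sup>L M (\<lambda>\<omega>. z i \<omega> * cnj (z j \<omega>))
                    = (if i = j then complex_of_real sigma2 else 0)"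
    and indep: "prob_space.indep_var M
                  (Pi\<^sub>M {1..N} (\<lambda>_. borel)) (\<lambda>\<omega>. restrict (\<lambda>i. s i \<omega>) {1..N})
                  (Pi\<^sub>M {1..N} (\<lambda>_. borel)) (\<lambda>\<omega>. restrict (\<lambda>i. z i \<omega>) {1..N})"
  shows "SINR M N pt k hk s z h =
      (pt / real N * (cmod (gfun N k hk h))^2) /
      (pt / real N * (\<Sum>k'\<in>{1..N} - {k}. (cmod (vfun N k k' hk h))^2)
       + sigma2 * (\<Sum>n\<in>{1..N}. (cmod (\<Sum>a\<in>{1..N}. htilde h a * cnj (Fmat N k a n)))^2))"
proof -
  define c0 where "c0 = complex_of_real (sqrt (pt / real N))"
  have c0: "(cmod (c0 * x))^2 = pt / real N * (cmod x)^2" for x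
    using pt N by (simp add: c0_def norm_mult power_mult_distrib)
  note QE = quad_E[OF M s_meas z_meas s_cov z_mean z_cov indep]
  have P: "(\<lambda>\<omega>. (cmod (Psig N pt k hk s h \<omega>))^2)
     = (\<lambda>\<omega>. (cmod ((\<Sum>i\<in>{k}. (c0 * gfun N k hk h) * s i \<omega>) + (\<Sum>n\<in>{}. (0::complex) * z n \<omega>)))^2)"
    by (simp add: Psig_def c0_def mult_ac)
  have EP: "integral\<^sup>L M (\<lambda>\<omega>. (cmod (Psig N pt k hk s h \<omega>))^2) = pt / real N * (cmod (gfun N k hk h))^2"
    unfolding P using k by (subst QE) (auto simp: c0)
  have I: "(\<lambda>\<omega>. (cmod (Iint N pt k hk s z h \<omega>))^2)
     = (\<lambda>\<omega>. (cmod ((\<Sum>i\<in>{1..N} - {k}. (c0 * vfun N k i hk h) * s i \<omega>)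
         + (\<Sum>n\<in>{1..N}. (\<Sum>a\<in>{1..N}. htilde h a * cnj (Fmat N k a n)) * z n \<omega>)))^2)"
  proof -
    have "Iint N pt k hk s z h \<omega> = (\<Sum>i\<in>{1..N} - {k}. (c0 * vfun N k i hk h) * s i \<omega>)
         + (\<Sum>n\<in>{1..N}. (\<Sum>a\<in>{1..N}. htilde h a * cnj (Fmat N k a n)) * z n \<omega>)" for \<omega>
    proof -
      have 1: "c0 * (\<Sum>k'\<in>{1..N} - {k}. s k' \<omega> * vfun N k k' hk h) = (\<Sum>i\<in>{1..N} - {k}. (c0 * vfun N k i hk h) * s i \<omega>)"
        by (simp add: sum_distrib_left mult_ac)
      have 2: "(\<Sum>a\<in>{1..N}. \<Sum>n\<in>{1..N}. htilde h a * cnj (Fmat N k a n) * z n \<omega>)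
          = (\<Sum>n\<in>{1..N}. (\<Sum>a\<in>{1..N}. htilde h a * cnj (Fmat N k a n)) * z n \<omega>)"
        by (subst sum.swap) (simp add: sum_distrib_right)
      show ?thesis unfolding Iint_def c0_def[symmetric] 1 2 ..
    qed
    then show ?thesis by simp
  qed
  have EI: "integral\<^sup>L M (\<lambda>\<omega>. (cmod (Iint N pt k hk s z h \<omega>))^2)
      = pt / real N * (\<Sum>k'\<in>{1..N} - {k}. (cmod (vfun N k k' hk h))^2)
       + sigma2 * (\<Sum>n\<in>{1..N}. (cmod (\<Sum>a\<in>{1..N}. htilde h a * cnj (Fmat N k a n)))^2)"
    unfolding I by (subst QE) (auto simp: c0 sum_distrib_left)
  show ?thesis unfolding SINR_def EP EI ..
qed


lemma arr_cmod[simp]: "cmod (arr x n) = 1"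
  by (simp add: arr_def)

lemma arr_1: "arr x 1 = 1"
  by (simp add: arr_def)

lemma arr_cnj_mult: "cnj (arr x n) * arr x n = 1"
  by (simp add: arr_def cis_cnj cis_mult)

lemma htilde_arr:
  assumes "ah \<noteq> 0"
  shows "htilde (\<lambda>n. ah * arr p n) a = arr p a / cnj ah"
proof -
  have "cnj (arr p a) * arr p a = 1" by (rule arr_cnj_mult)
  then have "cnj (arr p a) \<noteq> 0" by auto
  then show ?thesis using assms \<open>cnj (arr p a) * arr p a = 1\<close>
    by (simp add: htilde_def field_simps)
qed

lemma unit_sum:
  fixes u :: "nat \<Rightarrow> complex"
  assumes u1: "\<forall>a\<in>{1..N}. cmod (u a) = 1" and u0: "u 1 = 1" and N: "N \<ge> 1"
    and big: "real N \<le> cmod (\<Sum>a\<in>{1..N}. u a)"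
  shows "\<forall>a\<in>{1..N}. u a = 1"
proof -
  define w where "w = (\<Sum>a\<in>{1..N}. u a)"
  have "cmod w \<le> (\<Sum>a\<in>{1..N}. cmod (u a))" unfolding w_def by (rule norm_sum)
  also have "\<dots> = real N" using u1 by simp
  finally have wle: "cmod w \<le> real N" .
  have "real N \<le> cmod w" using big by (simp add: w_def)
  with wle have wN: "cmod w = real N" by linarith
  have le: "Re (u a * cnj w) \<le> real N" if "a \<in> {1..N}" for a
  proof -
    have "Re (u a * cnj w) \<le> cmod (u a * cnj w)" by (rule complex_Re_le_cmod)
    also have "\<dots> = real N" using u1 that wN by (simp add: norm_mult)
    finally show ?thesis .
  qed
  have "(\<Sum>a\<in>{1..N}. Re (u a * cnj w)) = Re (w * cnj w)"
    unfolding w_def by (simp add: sum_distrib_right)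
  also have "\<dots> = real N * real N" by (metis cmod_sq_Re' wN power2_eq_square)
  finally have sumeq: "(\<Sum>a\<in>{1..N}. real N - Re (u a * cnj w)) = 0"
    by (simp add: sum_subtractf)
  have eq: "Re (u a * cnj w) = real N" if a: "a \<in> {1..N}" for a
  proof -
    have "\<forall>a\<in>{1..N}. real N - Re (u a * cnj w) = 0"
      using sum_nonneg_eq_0_iff[of "{1..N}" "\<lambda>a. real N - Re (u a * cnj w)"] sumeq le by auto
    then show ?thesis using a by auto
  qed
  have eqc: "u a * cnj w = of_real (real N)" if a: "a \<in> {1..N}" for a
  proof -
    have c: "cmod (u a * cnj w) = real N" using u1 a wN by (simp add: norm_mult)
    have "(cmod (u a * cnj w))^2 = (Re (u a * cnj w))^2 + (Im (u a * cnj w))^2"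
      by (simp add: cmod_def)
    then have "Im (u a * cnj w) = 0" using c eq[OF a] by simp
    then show ?thesis using eq[OF a] by (simp add: complex_eq_iff)
  qed
  have cw: "cnj w = of_real (real N)" using eqc[of 1] u0 N by simp
  show ?thesis
  proof
    fix a assume a: "a \<in> {1..N}"
    have "u a * of_real (real N) = of_real (real N)" using eqc[OF a] cw by simp
    then show "u a = 1" using N by simp
  qed
qed

lemma frac_facts:
  fixes A C G K :: real
  assumes A: "A > 0" and C: "C > 0" and G: "G \<le> K" and K: "K \<ge> 0"
  shows "A * G / (A * (K - G) + C) \<le> A * K / C"
    and "A * K / C \<le> A * G / (A * (K - G) + C) \<Longrightarrow> K \<le> G"
proof -
  define D where "D = A * (K - G) + C"
  have D: "D > 0" unfolding D_def using A C G by (simp add: add_nonneg_pos)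
  have key: "A * K * D - A * G * C = (K - G) * (A * A * K + A * C)"
    by (simp add: D_def algebra_simps)
  have pos: "A * A * K + A * C > 0" using A C K by (simp add: add_nonneg_pos)
  have "A * G * C \<le> A * K * D" using key pos G by (smt (verit) mult_nonneg_nonneg)
  then show "A * G / (A * (K - G) + C) \<le> A * K / C"
    unfolding D_def[symmetric] using D C by (simp add: divide_simps)
  assume "A * K / C \<le> A * G / (A * (K - G) + C)"
  then have "A * K * D \<le> A * G * C"
    unfolding D_def[symmetric] using D C by (simp add: divide_simps)
  then have "(K - G) * (A * A * K + A * C) \<le> 0" using key by linarith
  then show "K \<le> G" using pos by (simp add: mult_le_0_iff)
qed


theorem corollary1:
  fixes M :: "'a measure"
    and N k :: nat and pt sigma2 \<theta> :: real and \<alpha> \<alpha>h :: complex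
    and s z :: "nat \<Rightarrow> 'a \<Rightarrow> complex"
  assumes N2: "N \<ge> 2"
    and pt: "pt > 0"
    and sig: "sigma2 > 0"
    and k: "k \<in> {1..N}"
    and alpha: "\<alpha> \<noteq> 0"
    and alphah: "\<alpha>h \<noteq> 0"
    and M: "prob_space M"
    and s_meas: "\<forall>i\<in>{1..N}. s i \<in> borel_measurable M"
    and z_meas: "\<forall>i\<in>{1..N}. z i \<in> borel_measurable M"
    and s_cov: "\<forall>i\<in>{1..N}. \<forall>j\<in>{1..N}.
                  integrable M (\<lambda>\<omega>. s i \<omega> * cnj (s j \<omega>)) \<and>
                  integral\<^sup>L M (\<lambda>\<omega>. s i \<omega> * cnj (s j \<omega>)) = (if i = j then 1 else 0)"
    and z_mean: "\<forall>i\<in>{1..N}. integrable M (z i) \<and> integral\<^sup>L M (z i) = 0"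
    and z_cov: "\<forall>i\<in>{1..N}. \<forall>j\<in>{1..N}.
                  integrable M (\<lambda>\<omega>. z i \<omega> * cnj (z j \<omega>)) \<and>
                  integral\<^sup>L M (\<lambda>\<omega>. z i \<omega> * cnj (z j \<omega>))
                    = (if i = j then complex_of_real sigma2 else 0)"
    and indep: "prob_space.indep_var M
                  (Pi\<^sub>M {1..N} (\<lambda>_. borel)) (\<lambda>\<omega>. restrict (\<lambda>i. s i \<omega>) {1..N})
                  (Pi\<^sub>M {1..N} (\<lambda>_. borel)) (\<lambda>\<omega>. restrict (\<lambda>i. z i \<omega>) {1..N})"
  shows "(\<exists>\<phi>\<in>{-pi..<pi}. \<forall>\<psi>\<in>{-pi..<pi}.
             SINR M N pt k (\<lambda>n. \<alpha> * arr \<theta> n) s z (\<lambda>n. \<alpha>h * arr \<psi> n)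
             \<le> SINR M N pt k (\<lambda>n. \<alpha> * arr \<theta> n) s z (\<lambda>n. \<alpha>h * arr \<phi> n))
       \<and> (\<forall>\<phi>\<in>{-pi..<pi}.
             (\<forall>\<psi>\<in>{-pi..<pi}.
                SINR M N pt k (\<lambda>n. \<alpha> * arr \<theta> n) s z (\<lambda>n. \<alpha>h * arr \<psi> n)
                \<le> SINR M N pt k (\<lambda>n. \<alpha> * arr \<theta> n) s z (\<lambda>n. \<alpha>h * arr \<phi> n))
             \<longrightarrow> (\<forall>n\<in>{1..N}. arr \<phi> n = arr \<theta> n))"
proof -
  have N0: "N > 0" using N2 by simp
  define hk where "hk = (\<lambda>n. \<alpha> * arr \<theta> n)"
  define hf where "hf = (\<lambda>p n. \<alpha>h * arr p n)"
  define \<rho> where "\<rho> = (cmod \<alpha> / cmod \<alpha>h)^2"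
  define u where "u = (\<lambda>p a. arr p a * cnj (arr \<theta> a))"
  define A where "A = pt / real N"
  define K where "K = real N * real N * \<rho>"
  define Cn where "Cn = sigma2 * (real N / (cmod \<alpha>h)^2)"
  define G where "G = (\<lambda>p. (cmod (gfun N k hk (hf p)))^2)"
  have \<rho>0: "\<rho> > 0" unfolding \<rho>_def using alpha alphah by simp
  have A0: "A > 0" unfolding A_def using pt N0 by simp
  have Cn0: "Cn > 0" unfolding Cn_def using sig N0 alphah by simp
  have K0: "K \<ge> 0" unfolding K_def using \<rho>0 by simp
  have r_eq: "htilde (hf p) a * cnj (hk a) = (cnj \<alpha> / cnj \<alpha>h) * u p a" for p a
    unfolding hf_def hk_def u_def htilde_arr[OF alphah] by simp
  have r_cmod: "(cmod (htilde (hf p) a * cnj (hk a)))^2 = \<rho>" for p a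
    unfolding r_eq u_def \<rho>_def by (simp add: norm_mult norm_divide)
  have g_eq: "gfun N k hk (hf p) = (cnj \<alpha> / cnj \<alpha>h) * (\<Sum>a\<in>{1..N}. u p a)" for p
    unfolding gfun_def v_eq[OF N0] by (simp add: r_eq ee_def sum_distrib_left)
  have G_eq: "G p = \<rho> * (cmod (\<Sum>a\<in>{1..N}. u p a))^2" for p
    unfolding G_def g_eq \<rho>_def by (simp add: norm_mult norm_divide power_mult_distrib power_divide)
  have u_cmod: "cmod (u p a) = 1" for p a unfolding u_def by (simp add: norm_mult)
  have G_le: "G p \<le> K" for p
  proof -
    have "cmod (\<Sum>a\<in>{1..N}. u p a) \<le> (\<Sum>a\<in>{1..N}. cmod (u p a))" by (rule norm_sum)
    also have "\<dots> = real N" by (simp add: u_cmod)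
    finally have "(cmod (\<Sum>a\<in>{1..N}. u p a))^2 \<le> (real N)^2" by (simp add: power_mono)
    then show ?thesis unfolding G_eq K_def using \<rho>0 by (simp add: power2_eq_square mult_ac)
  qed
  have vtot: "(\<Sum>k'\<in>{1..N}. (cmod (vfun N k k' hk (hf p)))^2) = K" for p
  proof -
    have "(\<Sum>k'\<in>{1..N}. (cmod (vfun N k k' hk (hf p)))^2)
        = real N * (\<Sum>a\<in>{1..N}. (cmod (htilde (hf p) a * cnj (hk a)))^2)"
      unfolding v_eq[OF N0] by (rule parseval[OF N0])
    also have "\<dots> = K" unfolding r_cmod K_def by simp
    finally show ?thesis .
  qed
  have vS: "(\<Sum>k'\<in>{1..N} - {k}. (cmod (vfun N k k' hk (hf p)))^2) = K - G p" for p
  proof -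
    have "(\<Sum>k'\<in>{1..N}. (cmod (vfun N k k' hk (hf p)))^2)
        = (cmod (vfun N k k hk (hf p)))^2 + (\<Sum>k'\<in>{1..N} - {k}. (cmod (vfun N k k' hk (hf p)))^2)"
      using k by (simp add: sum.remove)
    then show ?thesis using vtot[of p] unfolding G_def gfun_def by linarith
  qed
  have nz: "(\<Sum>n\<in>{1..N}. (cmod (\<Sum>a\<in>{1..N}. htilde (hf p) a * cnj (Fmat N k a n)))^2) = real N / (cmod \<alpha>h)^2" for p
    unfolding noise[OF N0] hf_def htilde_arr[OF alphah] by (simp add: norm_divide power_divide)
  have S_eq: "SINR M N pt k hk s z (hf p) = A * G p / (A * (K - G p) + Cn)" for p
    unfolding SINR_formula[OF N0 less_imp_le[OF pt] k M s_meas z_meas s_cov z_mean z_cov indep]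
      vS nz A_def[symmetric] Cn_def G_def ..
  define \<phi>0 where "\<phi>0 = arcsin (sin \<theta>)"
  have \<phi>0_in: "\<phi>0 \<in> {-pi..<pi}"
  proof -
    have "- (pi/2) \<le> \<phi>0" "\<phi>0 \<le> pi/2" unfolding \<phi>0_def
      using arcsin_bounded[of "sin \<theta>"] by auto
    then show ?thesis using pi_gt_zero unfolding atLeastLessThan_iff by linarith
  qed
  have arr0: "arr \<phi>0 n = arr \<theta> n" for n
    unfolding arr_def \<phi>0_def by (simp add: sin_arcsin)
  have G0: "G \<phi>0 = K"
  proof -
    have "u \<phi>0 a = 1" for a unfolding u_def arr0 by (subst mult.commute) (rule arr_cnj_mult)
    then show ?thesis unfolding G_eq K_def by (simp add: power2_eq_square mult_ac)
  qed
  have S0: "SINR M N pt k hk s z (hf \<phi>0) = A * K / Cn" unfolding S_eq G0 by simp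
  have part1: "\<forall>\<psi>\<in>{-pi..<pi}. SINR M N pt k hk s z (hf \<psi>) \<le> SINR M N pt k hk s z (hf \<phi>0)"
    using frac_facts(1)[OF A0 Cn0 G_le K0] by (simp add: S_eq G0)
  have part2: "\<forall>n\<in>{1..N}. arr \<phi> n = arr \<theta> n"
    if \<phi>: "\<phi> \<in> {-pi..<pi}" and mx: "\<forall>\<psi>\<in>{-pi..<pi}. SINR M N pt k hk s z (hf \<psi>) \<le> SINR M N pt k hk s z (hf \<phi>)"
    for \<phi>
  proof -
    have "A * K / Cn \<le> A * G \<phi> / (A * (K - G \<phi>) + Cn)"
      using mx \<phi>0_in S0 S_eq[of \<phi>] by fastforce
    then have KG: "K \<le> G \<phi>" by (rule frac_facts(2)[OF A0 Cn0 G_le K0])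
    have "(real N)^2 \<le> (cmod (\<Sum>a\<in>{1..N}. u \<phi> a))^2"
      using KG \<rho>0 unfolding G_eq K_def by (simp add: power2_eq_square mult_ac)
    then have big: "real N \<le> cmod (\<Sum>a\<in>{1..N}. u \<phi> a)"
      by (rule power2_le_imp_le) simp
    have u1: "u \<phi> 1 = 1" unfolding u_def arr_1 by simp
    have "\<forall>a\<in>{1..N}. u \<phi> a = 1"
      by (rule unit_sum) (use big N2 u1 in \<open>auto simp: u_cmod\<close>)
    then show ?thesis
    proof (intro ballI)
      fix n assume "\<forall>a\<in>{1..N}. u \<phi> a = 1" "n \<in> {1..N}"
      then have "arr \<phi> n * cnj (arr \<theta> n) = 1" unfolding u_def by auto
      then have "arr \<phi> n * cnj (arr \<theta> n) * arr \<theta> n = arr \<theta> n" by simp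
      then show "arr \<phi> n = arr \<theta> n" by (simp add: mult.assoc arr_cnj_mult)
    qed
  qed
  show ?thesis
    using part1 part2 \<phi>0_in unfolding hk_def hf_def by blast
qed

end
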